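(* Let $S\subseteq\mathcal S_d$ be nonempty, $[d]$ partitioned into groups $G_1,\dots,G_g$, $\bar\alpha,\bar\beta\in[0,1]^g$, $k\in[d]$, and assume an $(\bar\alpha,\bar\beta)$-$k$-fair ranking in $\mathcal S_d$ exists. Set $\alpha'_i=|G_i|-\lceil\beta_i k\rceil$ and $\beta'_i=|G_i|-\lfloor\alpha_i k\rfloor$. Let $\tau$ be an $(\bar\alpha',\bar\beta')$-constrained bottom-$(d-k)$ ranking minimizing $2\sum_{\pi\in S}\sum_{i\in D_\tau}(\tau(i)-\pi(i))\mathbb{1}[\pi(i)<\tau(i)]$, and let $\sigma\in\mathcal S_d$ be a ranking with $\sigma(a)=\tau(a)$ for all $a\in D_\tau$ minimizing $2\sum_{\pi\in S}\sum_{i\in[d]}(\sigma(i)-\pi(i))\mathbb{1}[\pi(i)<\sigma(i)]$ among such extensions. Let $\sigma^*$ be any $(\bar\alpha,\bar\beta)$-$k$-fair ranking minimizing $\mathrm{Obj}$, $\mathrm{OPT}=\mathrm{Obj}(\sigma^* )$, and $R^*=\{a\in[d]:\sigma^*(a)>k\}$. Then $\sigma$ is $(\bar\alpha,\bar\beta)$-$k$-fair and $\mathrm{Obj}(\sigma)\le\overrightarrow{\mathrm{Obj}}(\sigma^*_{R^*})+\mathrm{OPT}$.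
   Context: $\mathcal{S}_d$ is the set of rankings of $[d]$, $\pi(a)$ the rank of $a$. A ranking is $(\bar\alpha,\bar\beta)$-$k$-fair if for every $i\in[g]$ its top $k$ positions contain at least $\lfloor\alpha_i k\rfloor$ and at most $\lceil\beta_i k\rceil$ members of $G_i$. A bottom-$m$ ranking is a bijection $\tau:D_\tau\to\{d-m+1,\dots,d\}$, $D_\tau\subseteq[d]$; it is $(\bar\alpha',\bar\beta')$-constrained if $\alpha'_i\le|D_\tau\cap G_i|\le\beta'_i$ for all $i$. $F(\pi,\sigma)=\sum_i|\pi(i)-\sigma(i)|$, $\mathrm{Obj}(\sigma)=\sum_{\pi\in S}F(\pi,\sigma)$, and for $D\subseteq[d]$, $\overrightarrow{\mathrm{Obj}}(\sigma_D):=2\sum_{\pi\in S}\sum_{i\in D}(\sigma(i)-\pi(i))\mathbb{1}[\pi(i)<\sigma(i)]$. *)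

theory Defs
  imports Complex_Main
begin

text \<open>Rankings of [d] = {1..d}: bijections of {1..d}, normalised to 0 outside {1..d}
  so that distinct elements of the set represent distinct rankings.\<close>
definition rankings :: "nat \<Rightarrow> (nat \<Rightarrow> nat) set" where
  "rankings d = {\<pi>. bij_betw \<pi> {1..d} {1..d} \<and> (\<forall>a. a \<notin> {1..d} \<longrightarrow> \<pi> a = 0)}"

definition is_partition :: "nat \<Rightarrow> nat \<Rightarrow> (nat \<Rightarrow> nat set) \<Rightarrow> bool" where
  "is_partition d g G \<longleftrightarrow>
     (\<forall>i\<in>{1..g}. G i \<noteq> {} \<and> G i \<subseteq> {1..d}) \<and>
     (\<forall>i\<in>{1..g}. \<forall>j\<in>{1..g}. i \<noteq> j \<longrightarrow> G i \<inter> G j = {}) \<and>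
     (\<Union>i\<in>{1..g}. G i) = {1..d}"

definition k_fair :: "nat \<Rightarrow> (nat \<Rightarrow> nat set) \<Rightarrow> (nat \<Rightarrow> real) \<Rightarrow> (nat \<Rightarrow> real)
    \<Rightarrow> nat \<Rightarrow> (nat \<Rightarrow> nat) \<Rightarrow> bool" where
  "k_fair g G \<alpha> \<beta> k \<pi> \<longleftrightarrow>
     (\<forall>i\<in>{1..g}. \<lfloor>\<alpha> i * real k\<rfloor> \<le> int (card {a \<in> G i. \<pi> a \<le> k}) \<and>
                  int (card {a \<in> G i. \<pi> a \<le> k}) \<le> \<lceil>\<beta> i * real k\<rceil>)"

definition bottom_ranking :: "nat \<Rightarrow> nat \<Rightarrow> nat set \<Rightarrow> (nat \<Rightarrow> nat) \<Rightarrow> bool" where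
  "bottom_ranking d m D \<tau> \<longleftrightarrow> D \<subseteq> {1..d} \<and> bij_betw \<tau> D {d - m + 1..d}"

definition constrained_bottom :: "nat \<Rightarrow> nat \<Rightarrow> (nat \<Rightarrow> nat set) \<Rightarrow> (nat \<Rightarrow> int) \<Rightarrow> (nat \<Rightarrow> int)
    \<Rightarrow> nat \<Rightarrow> nat set \<Rightarrow> (nat \<Rightarrow> nat) \<Rightarrow> bool" where
  "constrained_bottom d g G \<alpha>' \<beta>' m D \<tau> \<longleftrightarrow> bottom_ranking d m D \<tau> \<and>
     (\<forall>i\<in>{1..g}. \<alpha>' i \<le> int (card (D \<inter> G i)) \<and> int (card (D \<inter> G i)) \<le> \<beta>' i)"

definition footrule :: "nat \<Rightarrow> (nat \<Rightarrow> nat) \<Rightarrow> (nat \<Rightarrow> nat) \<Rightarrow> int" where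
  "footrule d \<pi> \<sigma> = (\<Sum>i\<in>{1..d}. \<bar>int (\<pi> i) - int (\<sigma> i)\<bar>)"

definition Obj :: "nat \<Rightarrow> (nat \<Rightarrow> nat) set \<Rightarrow> (nat \<Rightarrow> nat) \<Rightarrow> int" where
  "Obj d S \<sigma> = (\<Sum>\<pi>\<in>S. footrule d \<pi> \<sigma>)"

definition ObjDir :: "(nat \<Rightarrow> nat) set \<Rightarrow> nat set \<Rightarrow> (nat \<Rightarrow> nat) \<Rightarrow> int" where
  "ObjDir S D \<sigma> = 2 * (\<Sum>\<pi>\<in>S. \<Sum>i\<in>D. (if \<pi> i < \<sigma> i then int (\<sigma> i) - int (\<pi> i) else 0))"

end

theory Submission
  imports Defs
begin


lemma objdir_split:
  "finite A \<Longrightarrow> finite B \<Longrightarrow> A \<inter> B = {} \<Longrightarrow>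
   ObjDir S (A \<union> B) \<sigma> = ObjDir S A \<sigma> + ObjDir S B \<sigma>"
  by (simp add: ObjDir_def sum.union_disjoint sum.distrib algebra_simps)

lemma objdir_mono_set:
  "finite B \<Longrightarrow> A \<subseteq> B \<Longrightarrow> ObjDir S A \<sigma> \<le> ObjDir S B \<sigma>"
  unfolding ObjDir_def by (auto intro!: sum_mono sum_mono2)

lemma objdir_mono_fun:
  "\<forall>a\<in>A. \<sigma> a \<le> \<sigma>' a \<Longrightarrow> ObjDir S A \<sigma> \<le> ObjDir S A \<sigma>'"
  unfolding ObjDir_def by (auto intro!: sum_mono)

lemma objdir_cong:
  "\<forall>a\<in>A. \<sigma> a = \<sigma>' a \<Longrightarrow> ObjDir S A \<sigma> = ObjDir S A \<sigma>'"
  unfolding ObjDir_def by (auto intro!: sum.cong)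

lemma sum_rank: "\<pi> \<in> rankings d \<Longrightarrow> (\<Sum>i\<in>{1..d}. \<pi> i) = (\<Sum>i\<in>{1..d}. i)"
  unfolding rankings_def using sum.reindex_bij_betw[of \<pi> "{1..d}" "{1..d}" "\<lambda>i. i"] by auto

lemma footrule_eq:
  assumes "\<pi> \<in> rankings d" "\<sigma> \<in> rankings d"
  shows "footrule d \<pi> \<sigma> = 2 * (\<Sum>i\<in>{1..d}. (if \<pi> i < \<sigma> i then int (\<sigma> i) - int (\<pi> i) else 0))"
proof -
  have e: "\<And>i. \<bar>int (\<pi> i) - int (\<sigma> i)\<bar> = 2 * (if \<pi> i < \<sigma> i then int (\<sigma> i) - int (\<pi> i) else 0) - (int (\<sigma> i) - int (\<pi> i))"
    by auto
  have s: "(\<Sum>i\<in>{1..d}. int (\<sigma> i)) = (\<Sum>i\<in>{1..d}. int (\<pi> i))"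
    using sum_rank[OF assms(1)] sum_rank[OF assms(2)] by (metis of_nat_sum)
  show ?thesis
    unfolding footrule_def e using s
    by (simp add: sum_subtractf sum_distrib_left)
qed

lemma Obj_eq:
  "S \<subseteq> rankings d \<Longrightarrow> \<sigma> \<in> rankings d \<Longrightarrow> Obj d S \<sigma> = ObjDir S {1..d} \<sigma>"
  unfolding Obj_def ObjDir_def sum_distrib_left
  by (rule sum.cong) (auto simp: footrule_eq sum_distrib_left)



theorem lemmaB2:
  fixes d g k :: nat and G :: "nat \<Rightarrow> nat set" and \<alpha> \<beta> :: "nat \<Rightarrow> real"
    and S :: "(nat \<Rightarrow> nat) set"
    and \<alpha>' \<beta>' :: "nat \<Rightarrow> int"
    and D :: "nat set" and \<tau> \<sigma> \<sigma>s :: "nat \<Rightarrow> nat"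
  assumes S_sub: "S \<subseteq> rankings d" and S_ne: "S \<noteq> {}"
    and part: "is_partition d g G"
    and ab: "\<forall>i\<in>{1..g}. 0 \<le> \<alpha> i \<and> \<alpha> i \<le> 1 \<and> 0 \<le> \<beta> i \<and> \<beta> i \<le> 1"
    and k: "1 \<le> k" "k \<le> d"
    and fair_ex: "\<exists>\<pi>\<in>rankings d. k_fair g G \<alpha> \<beta> k \<pi>"
    and \<alpha>'_def: "\<forall>i. \<alpha>' i = int (card (G i)) - \<lceil>\<beta> i * real k\<rceil>"
    and \<beta>'_def: "\<forall>i. \<beta>' i = int (card (G i)) - \<lfloor>\<alpha> i * real k\<rfloor>"
    and \<tau>: "constrained_bottom d g G \<alpha>' \<beta>' (d - k) D \<tau>"
    and \<tau>_min: "\<And>D2 \<tau>2. constrained_bottom d g G \<alpha>' \<beta>' (d - k) D2 \<tau>2 \<Longrightarrow>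
                   ObjDir S D \<tau> \<le> ObjDir S D2 \<tau>2"
    and \<sigma>: "\<sigma> \<in> rankings d" "\<forall>a\<in>D. \<sigma> a = \<tau> a"
    and \<sigma>_min: "\<And>\<sigma>2. \<sigma>2 \<in> rankings d \<Longrightarrow> \<forall>a\<in>D. \<sigma>2 a = \<tau> a \<Longrightarrow>
                   ObjDir S {1..d} \<sigma> \<le> ObjDir S {1..d} \<sigma>2"
    and \<sigma>s: "\<sigma>s \<in> rankings d" "k_fair g G \<alpha> \<beta> k \<sigma>s"
    and \<sigma>s_min: "\<And>\<sigma>2. \<sigma>2 \<in> rankings d \<Longrightarrow> k_fair g G \<alpha> \<beta> k \<sigma>2 \<Longrightarrow> Obj d S \<sigma>s \<le> Obj d S \<sigma>2"
  shows "k_fair g G \<alpha> \<beta> k \<sigma> \<and>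
         Obj d S \<sigma> \<le> ObjDir S {a\<in>{1..d}. \<sigma>s a > k} \<sigma>s + Obj d S \<sigma>s"
  proof -
  have DT: "D \<subseteq> {1..d}" "bij_betw \<tau> D {k+1..d}"
    using \<tau> k unfolding constrained_bottom_def bottom_ranking_def
    by (auto simp: Suc_diff_Suc)
  have Dc: "\<forall>i\<in>{1..g}. \<alpha>' i \<le> int (card (D \<inter> G i)) \<and> int (card (D \<inter> G i)) \<le> \<beta>' i"
    using \<tau> unfolding constrained_bottom_def by auto
  have Gsub: "\<And>i. i \<in> {1..g} \<Longrightarrow> G i \<subseteq> {1..d}" using part unfolding is_partition_def by auto
  have sbij: "bij_betw \<sigma> {1..d} {1..d}" using \<sigma>(1) unfolding rankings_def by auto
  have ssbij: "bij_betw \<sigma>s {1..d} {1..d}" using \<sigma>s(1) unfolding rankings_def by auto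
  have top: "{a \<in> G i. \<sigma> a \<le> k} = G i - D" if i: "i \<in> {1..g}" for i
  proof (intro set_eqI iffI)
    fix a assume a: "a \<in> {a \<in> G i. \<sigma> a \<le> k}"
    have "a \<notin> D"
    proof
      assume "a \<in> D"
      then have "\<tau> a \<in> {k+1..d}" using DT(2) bij_betwE by blast
      then show False using a \<sigma>(2) \<open>a \<in> D\<close> by auto
    qed
    then show "a \<in> G i - D" using a by auto
  next
    fix a assume a: "a \<in> G i - D"
    then have ad: "a \<in> {1..d}" using Gsub[OF i] by auto
    then have sa: "\<sigma> a \<in> {1..d}" using sbij bij_betwE by blast
    show "a \<in> {a \<in> G i. \<sigma> a \<le> k}"
    proof (rule ccontr)
      assume "a \<notin> {a \<in> G i. \<sigma> a \<le> k}"
      then have "\<sigma> a \<in> {k+1..d}" using a sa by auto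
      then obtain b where b: "b \<in> D" "\<tau> b = \<sigma> a" using DT(2) by (metis bij_betw_imp_surj_on imageE)
      then have "\<sigma> b = \<sigma> a" using \<sigma>(2) by auto
      moreover have "b \<in> {1..d}" using b DT(1) by auto
      ultimately have "b = a" using ad sbij unfolding bij_betw_def inj_on_def by blast
      then show False using a b by auto
    qed
  qed
  have fair: "k_fair g G \<alpha> \<beta> k \<sigma>"
    unfolding k_fair_def
  proof
    fix i assume i: "i \<in> {1..g}"
    have fin: "finite (G i)" using Gsub[OF i] finite_subset by blast
    have "card {a \<in> G i. \<sigma> a \<le> k} = card (G i) - card (D \<inter> G i)"
      using top[OF i] card_Diff_subset_Int[of "G i" D] fin by (simp add: Int_commute)
    moreover have "card (D \<inter> G i) \<le> card (G i)" using fin by (simp add: card_mono)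
    ultimately have "int (card {a \<in> G i. \<sigma> a \<le> k}) = int (card (G i)) - int (card (D \<inter> G i))"
      by simp
    then show "\<lfloor>\<alpha> i * real k\<rfloor> \<le> int (card {a \<in> G i. \<sigma> a \<le> k}) \<and>
          int (card {a \<in> G i. \<sigma> a \<le> k}) \<le> \<lceil>\<beta> i * real k\<rceil>"
      using Dc i \<alpha>'_def \<beta>'_def by force
  qed
  define R where "R = {a\<in>{1..d}. \<sigma>s a > k}"
  have Rsub: "R \<subseteq> {1..d}" unfolding R_def by auto
  have Rbij: "bij_betw \<sigma>s R {k+1..d}"
  proof -
    have "inj_on \<sigma>s R" using ssbij Rsub unfolding bij_betw_def by (meson inj_on_subset)
    moreover have "\<sigma>s ` R = {k+1..d}"
    proof
      show "\<sigma>s ` R \<subseteq> {k+1..d}" unfolding R_def using ssbij bij_betwE by fastforce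
      show "{k+1..d} \<subseteq> \<sigma>s ` R"
      proof
        fix y assume y: "y \<in> {k+1..d}"
        then have "y \<in> \<sigma>s ` {1..d}" using ssbij k unfolding bij_betw_def by auto
        then obtain a where "a \<in> {1..d}" "y = \<sigma>s a" by auto
        then show "y \<in> \<sigma>s ` R" using y unfolding R_def by auto
      qed
    qed
    ultimately show ?thesis unfolding bij_betw_def by auto
  qed
  have Rcb: "constrained_bottom d g G \<alpha>' \<beta>' (d - k) R \<sigma>s"
    unfolding constrained_bottom_def bottom_ranking_def
  proof (intro conjI ballI)
    show "R \<subseteq> {1..d}" by (rule Rsub)
    show "bij_betw \<sigma>s R {d - (d - k) + 1..d}" using Rbij k by (simp add: Suc_diff_Suc)
  next
    fix i assume i: "i \<in> {1..g}"
    have fin: "finite (G i)" using Gsub[OF i] finite_subset by blast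
    have eq: "{a \<in> G i. \<sigma>s a \<le> k} = G i - (R \<inter> G i)" using Gsub[OF i] unfolding R_def by auto
    have "card {a \<in> G i. \<sigma>s a \<le> k} = card (G i) - card (R \<inter> G i)"
      unfolding eq using fin by (simp add: card_Diff_subset)
    moreover have "card (R \<inter> G i) \<le> card (G i)" using fin by (simp add: card_mono)
    ultimately have "int (card (R \<inter> G i)) = int (card (G i)) - int (card {a \<in> G i. \<sigma>s a \<le> k})"
      by simp
    moreover have "\<lfloor>\<alpha> i * real k\<rfloor> \<le> int (card {a \<in> G i. \<sigma>s a \<le> k}) \<and>
          int (card {a \<in> G i. \<sigma>s a \<le> k}) \<le> \<lceil>\<beta> i * real k\<rceil>"
      using \<sigma>s(2) i unfolding k_fair_def by auto
    ultimately show "\<alpha>' i \<le> int (card (R \<inter> G i))" "int (card (R \<inter> G i)) \<le> \<beta>' i"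
      using \<alpha>'_def \<beta>'_def by auto
  qed
  have step1: "ObjDir S D \<tau> \<le> ObjDir S R \<sigma>s" using \<tau>_min[OF Rcb] .
  define T where "T = {1..d} - D"
  have cardD: "card D = d - k" using bij_betw_same_card[OF DT(2)] by simp
  have cardT: "card T = k" unfolding T_def using cardD DT(1) k
    by (simp add: card_Diff_subset finite_subset)
  have finT: "finite T" unfolding T_def by auto
  define r where "r a = card {b\<in>T. \<sigma>s b \<le> \<sigma>s a}" for a
  define \<sigma>' where "\<sigma>' a = (if a \<in> D then \<tau> a else if a \<in> T then r a else 0)" for a
  have ssinj: "inj_on \<sigma>s {1..d}" using ssbij unfolding bij_betw_def by auto
  have r_range: "r a \<in> {1..k}" if a: "a \<in> T" for a
  proof -
    have "{b\<in>T. \<sigma>s b \<le> \<sigma>s a} \<subseteq> T" by auto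
    then have "r a \<le> k" unfolding r_def using cardT finT by (metis card_mono)
    moreover have "r a \<ge> 1" unfolding r_def using a finT
      by (metis (mono_tags, lifting) One_nat_def Suc_leI card_gt_0_iff empty_iff
          finite_subset mem_Collect_eq order_refl subsetI)
    ultimately show ?thesis by auto
  qed
  have r_le: "r a \<le> \<sigma>s a" if a: "a \<in> T" for a
  proof -
    have "card {b\<in>T. \<sigma>s b \<le> \<sigma>s a} \<le> card {1..\<sigma>s a}"
    proof (rule card_inj_on_le)
      show "inj_on \<sigma>s {b\<in>T. \<sigma>s b \<le> \<sigma>s a}" using ssinj unfolding T_def by (auto intro: inj_on_subset)
      show "\<sigma>s ` {b\<in>T. \<sigma>s b \<le> \<sigma>s a} \<subseteq> {1..\<sigma>s a}"
        using ssbij unfolding T_def bij_betw_def by auto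
    qed auto
    then show ?thesis unfolding r_def by simp
  qed
  have r_inj: "inj_on r T"
  proof (rule inj_onI)
    fix a b assume ab: "a \<in> T" "b \<in> T" "r a = r b"
    show "a = b"
    proof (rule ccontr)
      assume "a \<noteq> b"
      then have ne: "\<sigma>s a \<noteq> \<sigma>s b" using ssinj ab(1,2) unfolding T_def by (metis DiffD1 inj_onD)
      have lt: "r x < r y" if xy: "x \<in> T" "y \<in> T" "\<sigma>s x < \<sigma>s y" for x y
        unfolding r_def
      proof (rule psubset_card_mono)
        show "finite {b \<in> T. \<sigma>s b \<le> \<sigma>s y}" using finT by auto
        have "{b \<in> T. \<sigma>s b \<le> \<sigma>s x} \<subseteq> {b \<in> T. \<sigma>s b \<le> \<sigma>s y}" using xy(3) by auto
        moreover have "y \<in> {b \<in> T. \<sigma>s b \<le> \<sigma>s y}" using xy(2) by simp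
        moreover have "y \<notin> {b \<in> T. \<sigma>s b \<le> \<sigma>s x}" using xy(3) by simp
        ultimately show "{b \<in> T. \<sigma>s b \<le> \<sigma>s x} \<subset> {b \<in> T. \<sigma>s b \<le> \<sigma>s y}" by blast
      qed
      from ne have "\<sigma>s a < \<sigma>s b \<or> \<sigma>s b < \<sigma>s a" by auto
      then show False using lt[OF ab(1) ab(2)] lt[OF ab(2) ab(1)] ab(3) by auto
    qed
  qed
  have s'rank: "\<sigma>' \<in> rankings d"
  proof -
    have inj: "inj_on \<sigma>' {1..d}"
    proof (rule inj_onI)
      fix a b assume a: "a \<in> {1..d}" and b: "b \<in> {1..d}" and e: "\<sigma>' a = \<sigma>' b"
      have tD: "\<And>x. x \<in> D \<Longrightarrow> \<tau> x \<in> {k+1..d}" using DT(2) bij_betwE by blast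
      have injt: "inj_on \<tau> D" using DT(2) bij_betw_def by blast
      show "a = b"
      proof (cases "a \<in> D")
        case True
        show ?thesis
        proof (cases "b \<in> D")
          case True then show ?thesis using \<open>a \<in> D\<close> e injt unfolding \<sigma>'_def inj_on_def by auto
        next
          case False
          then have "b \<in> T" using b unfolding T_def by auto
          then show ?thesis using r_range[of b] tD[OF \<open>a \<in> D\<close>] e False \<open>a \<in> D\<close>
            unfolding \<sigma>'_def by auto
        qed
      next
        case False
        then have aT: "a \<in> T" using a unfolding T_def by auto
        show ?thesis
        proof (cases "b \<in> D")
          case True
          then show ?thesis using r_range[OF aT] tD[OF True] e False aT
            unfolding \<sigma>'_def by auto
        next
          case bF: False
          then have "b \<in> T" using b unfolding T_def by auto
          then show ?thesis using aT e False bF r_inj unfolding \<sigma>'_def inj_on_def by auto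
        qed
      qed
    qed
    have img: "\<sigma>' ` {1..d} \<subseteq> {1..d}"
    proof
      fix y assume "y \<in> \<sigma>' ` {1..d}"
      then obtain a where a: "a \<in> {1..d}" "y = \<sigma>' a" by auto
      show "y \<in> {1..d}"
      proof (cases "a \<in> D")
        case True then show ?thesis using a DT(2) bij_betwE[OF DT(2)] unfolding \<sigma>'_def by auto
      next
        case False
        then have "a \<in> T" using a unfolding T_def by auto
        then show ?thesis using a r_range[of a] k False unfolding \<sigma>'_def by auto
      qed
    qed
    have "\<sigma>' ` {1..d} = {1..d}" using endo_inj_surj[OF _ img inj] by simp
    moreover have "\<forall>a. a \<notin> {1..d} \<longrightarrow> \<sigma>' a = 0" using DT(1) unfolding \<sigma>'_def T_def by auto
    ultimately show ?thesis unfolding rankings_def bij_betw_def using inj by auto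
  qed
  have "\<forall>a\<in>D. \<sigma>' a = \<tau> a" unfolding \<sigma>'_def by auto
  then have step2: "ObjDir S {1..d} \<sigma> \<le> ObjDir S {1..d} \<sigma>'" using \<sigma>_min[OF s'rank] by auto
  have split: "{1..d} = D \<union> T" "D \<inter> T = {}" unfolding T_def using DT(1) by auto
  have finD: "finite D" using DT(1) finite_subset by blast
  have "ObjDir S {1..d} \<sigma>' = ObjDir S D \<sigma>' + ObjDir S T \<sigma>'"
    using objdir_split[OF finD finT split(2)] split(1) by simp
  also have "ObjDir S D \<sigma>' = ObjDir S D \<tau>" by (rule objdir_cong) (auto simp: \<sigma>'_def)
  also have "ObjDir S T \<sigma>' \<le> ObjDir S T \<sigma>s"
    by (rule objdir_mono_fun) (auto simp: \<sigma>'_def T_def r_le)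
  also have "ObjDir S T \<sigma>s \<le> ObjDir S {1..d} \<sigma>s"
    by (rule objdir_mono_set) (auto simp: T_def)
  finally have "ObjDir S {1..d} \<sigma>' \<le> ObjDir S R \<sigma>s + ObjDir S {1..d} \<sigma>s" using step1 by simp
  then have "Obj d S \<sigma> \<le> ObjDir S R \<sigma>s + Obj d S \<sigma>s"
    using step2 Obj_eq[OF S_sub \<sigma>(1)] Obj_eq[OF S_sub \<sigma>s(1)] by simp
  then show ?thesis using fair unfolding R_def by simp
qed

end
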